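(* Let $K\ge 1$ be an integer, $\alpha\in(0,1)$, $\epsilon>0$, $\delta>0$, and let $n_\mathrm{cal}$ be a positive integer. Set $C(K)=(1+\epsilon)\sum_{j=1}^K \frac{1}{j}$ and, for $j=1,\dots,K$, $a_j=\left\lfloor (n_\mathrm{cal}+1)\frac{\alpha j}{C(K)K}\right\rfloor$, $b_j=(n_\mathrm{cal}+1)-a_j$, $\mu_j=\frac{a_j}{a_j+b_j}$. Suppose $n_\mathrm{cal}$ is such that $$\min_{j=1,\dots,K} I_{(1+\epsilon)\mu_j}(a_j,b_j)\ \ge\ 1-\frac{\delta}{K^2},$$ where $I_x(a,b)$ denotes the regularized incomplete beta function (the CDF at $x$ of a $\mathrm{Beta}(a,b)$ distribution). Let $\{r^i_j : i,j=1,\dots,K\}$ be random variables (with arbitrary joint distribution) such that $r^i_j\sim\mathrm{Beta}(a_j,b_j)$ for each $i,j$. Then $$P\left\{\bigcap_{i=1}^K\bigcap_{j=1}^K\left\{ r^i_j\le (1+\epsilon)\frac{\alpha j}{C(K)K}\right\}\right\}\ \ge\ 1-\delta.$$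
   Context: The quantities $a_j,b_j$ are assumed to be such that the Beta distributions $\mathrm{Beta}(a_j,b_j)$ are well defined (i.e. $a_j\ge 1$, $b_j\ge 1$), as implicit in the hypothesis. *)

theory Defs
  imports "HOL-Probability.Probability"
begin

definition beta_density :: "real \<Rightarrow> real \<Rightarrow> real \<Rightarrow> real" where
  "beta_density a b x =
     (if 0 < x \<and> x < 1 then x powr (a - 1) * (1 - x) powr (b - 1) / Beta a b else 0)"

definition reg_inc_beta :: "real \<Rightarrow> real \<Rightarrow> real \<Rightarrow> real" where
  "reg_inc_beta x a b = (LINT t:{..x}|lborel. beta_density a b t)"

definition CK :: "real \<Rightarrow> nat \<Rightarrow> real" where
  "CK eps K = (1 + eps) * (\<Sum>j=1..K. 1 / real j)"

definition a_par :: "nat \<Rightarrow> real \<Rightarrow> real \<Rightarrow> nat \<Rightarrow> nat \<Rightarrow> real" where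
  "a_par ncal alpha eps K j =
     of_int \<lfloor>(real ncal + 1) * (alpha * real j / (CK eps K * real K))\<rfloor>"

definition b_par :: "nat \<Rightarrow> real \<Rightarrow> real \<Rightarrow> nat \<Rightarrow> nat \<Rightarrow> real" where
  "b_par ncal alpha eps K j = (real ncal + 1) - a_par ncal alpha eps K j"

definition mu_par :: "nat \<Rightarrow> real \<Rightarrow> real \<Rightarrow> nat \<Rightarrow> nat \<Rightarrow> real" where
  "mu_par ncal alpha eps K j =
     a_par ncal alpha eps K j / (a_par ncal alpha eps K j + b_par ncal alpha eps K j)"

end

theory Submission
  imports Defs
begin

lemma beta_density_nonneg: "a \<ge> 1 \<Longrightarrow> b \<ge> 1 \<Longrightarrow> 0 \<le> beta_density a b x"
  unfolding beta_density_def by (auto intro!: divide_nonneg_pos simp: Beta_def Gamma_real_pos)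

lemma beta_density_meas[measurable]: "beta_density a b \<in> borel_measurable borel"
  unfolding beta_density_def by measurable

lemma cdf_eq:
  assumes D: "distributed M lborel X (\<lambda>x. ennreal (beta_density a b x))" and a: "a \<ge> 1" and b: "b \<ge> 1"
  shows "measure M {\<omega> \<in> space M. X \<omega> \<le> t} = reg_inc_beta t a b"
proof -
  have Xm: "X \<in> measurable M lborel" using D by (rule distributed_measurable)
  have "measure M {\<omega> \<in> space M. X \<omega> \<le> t} = measure M (X -` {..t} \<inter> space M)"
    by (auto intro: arg_cong[where f="measure M"])
  also have "\<dots> = measure (distr M lborel X) {..t}"
    using Xm by (simp add: measure_distr)
  also have "\<dots> = measure (density lborel (\<lambda>x. ennreal (beta_density a b x))) {..t}"
    using distributed_distr_eq_density[OF D] by simp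
  also have "\<dots> = enn2real (\<integral>\<^sup>+ x. ennreal (beta_density a b x) * indicator {..t} x \<partial>lborel)"
    by (simp add: measure_def emeasure_density)
  also have "\<dots> = enn2real (\<integral>\<^sup>+ x. ennreal (indicator {..t} x *\<^sub>R beta_density a b x) \<partial>lborel)"
    by (intro arg_cong[where f=enn2real] nn_integral_cong) (auto simp: indicator_def)
  also have "\<dots> = reg_inc_beta t a b"
    unfolding reg_inc_beta_def set_lebesgue_integral_def
    by (rule integral_eq_nn_integral[symmetric]) (auto simp: beta_density_nonneg a b)
  finally show ?thesis .
qed

theorem lemma1:
  fixes M :: "'s measure" and r :: "nat \<Rightarrow> nat \<Rightarrow> 's \<Rightarrow> real"
    and K ncal :: nat and alpha eps delta :: real
  assumes "prob_space M"
    and "K \<ge> 1" and "0 < alpha" and "alpha < 1" and "eps > 0" and "delta > 0"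
    and "ncal > 0"
    and ab_ge1: "\<And>j. j \<in> {1..K} \<Longrightarrow>
                   a_par ncal alpha eps K j \<ge> 1 \<and> b_par ncal alpha eps K j \<ge> 1"
    and hyp: "(MIN j\<in>{1..K}. reg_inc_beta ((1 + eps) * mu_par ncal alpha eps K j)
                  (a_par ncal alpha eps K j) (b_par ncal alpha eps K j))
              \<ge> 1 - delta / (real K)^2"
    and distr: "\<And>i j. i \<in> {1..K} \<Longrightarrow> j \<in> {1..K} \<Longrightarrow>
        distributed M lborel (r i j)
          (\<lambda>x. ennreal (beta_density (a_par ncal alpha eps K j) (b_par ncal alpha eps K j) x))"
  shows "measure M {\<omega> \<in> space M. \<forall>i\<in>{1..K}. \<forall>j\<in>{1..K}.
            r i j \<omega> \<le> (1 + eps) * (alpha * real j / (CK eps K * real K))} \<ge> 1 - delta"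
proof -
  interpret P: prob_space M by fact
  define t where "t j = (1 + eps) * (alpha * real j / (CK eps K * real K))" for j
  define B where "B ij = {\<omega> \<in> space M. r (fst ij) (snd ij) \<omega> > t (snd ij)}" for ij
  have CKpos: "CK eps K > 0"
  proof -
    have "(\<Sum>j=1..K. 1 / real j) \<ge> 1 / real 1"
      using \<open>K \<ge> 1\<close> by (intro member_le_sum) auto
    thus ?thesis unfolding CK_def using \<open>eps > 0\<close> by (intro mult_pos_pos) auto
  qed
  have Bm: "B ij \<in> P.events" if "ij \<in> {1..K} \<times> {1..K}" for ij
  proof -
    have "r (fst ij) (snd ij) \<in> borel_measurable M"
      using distributed_measurable[OF distr[of "fst ij" "snd ij"]] that by auto
    thus ?thesis unfolding B_def by measurable
  qed
  have Bbound: "P.prob (B ij) \<le> delta / (real K)^2" if ij: "ij \<in> {1..K} \<times> {1..K}" for ij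
  proof -
    obtain i j where ijd: "ij = (i, j)" "i \<in> {1..K}" "j \<in> {1..K}" using ij by auto
    let ?a = "a_par ncal alpha eps K j" and ?b = "b_par ncal alpha eps K j"
    have ab: "?a \<ge> 1" "?b \<ge> 1" using ab_ge1 ijd by auto
    have rm: "r i j \<in> borel_measurable M"
      using distributed_measurable[OF distr[of i j]] ijd by auto
    define q where "q = alpha * real j / (CK eps K * real K)"
    have aq: "?a \<le> (real ncal + 1) * q" unfolding a_par_def q_def by linarith
    have mu: "mu_par ncal alpha eps K j \<le> q"
      unfolding mu_par_def b_par_def using aq by (simp add: divide_simps mult.commute)
    have st: "(1 + eps) * mu_par ncal alpha eps K j \<le> t j"
      unfolding t_def q_def[symmetric] using mu \<open>eps > 0\<close> by (intro mult_left_mono) auto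
    have "1 - delta / (real K)^2 \<le> reg_inc_beta ((1 + eps) * mu_par ncal alpha eps K j) ?a ?b"
    proof -
      have "(MIN j\<in>{1..K}. reg_inc_beta ((1 + eps) * mu_par ncal alpha eps K j)
                  (a_par ncal alpha eps K j) (b_par ncal alpha eps K j))
            \<le> reg_inc_beta ((1 + eps) * mu_par ncal alpha eps K j) ?a ?b"
        using ijd by (intro Min_le) auto
      thus ?thesis using hyp by linarith
    qed
    also have "\<dots> = P.prob {\<omega> \<in> space M. r i j \<omega> \<le> (1 + eps) * mu_par ncal alpha eps K j}"
      by (rule cdf_eq[symmetric, OF distr[OF ijd(2,3)] ab])
    also have "\<dots> \<le> P.prob {\<omega> \<in> space M. r i j \<omega> \<le> t j}"
      using st rm by (intro P.finite_measure_mono) auto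
    finally have le: "1 - delta / (real K)^2 \<le> P.prob {\<omega> \<in> space M. r i j \<omega> \<le> t j}" .
    have "B ij = space M - {\<omega> \<in> space M. r i j \<omega> \<le> t j}"
      unfolding B_def ijd by auto
    hence "P.prob (B ij) = 1 - P.prob {\<omega> \<in> space M. r i j \<omega> \<le> t j}"
      using rm by (simp add: P.prob_compl)
    thus ?thesis using le by linarith
  qed
  have U: "P.prob (\<Union>ij\<in>{1..K} \<times> {1..K}. B ij) \<le> (\<Sum>ij\<in>{1..K} \<times> {1..K}. P.prob (B ij))"
    using Bm by (intro P.finite_measure_subadditive_finite) auto
  also have "\<dots> \<le> (\<Sum>ij\<in>{1..K} \<times> {1..K}. delta / (real K)^2)"
    by (intro sum_mono Bbound)
  also have "\<dots> = delta"
    using \<open>K \<ge> 1\<close> by (simp add: power2_eq_square)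
  finally have Ule: "P.prob (\<Union>ij\<in>{1..K} \<times> {1..K}. B ij) \<le> delta" .
  have eq: "{\<omega> \<in> space M. \<forall>i\<in>{1..K}. \<forall>j\<in>{1..K}.
            r i j \<omega> \<le> (1 + eps) * (alpha * real j / (CK eps K * real K))}
        = space M - (\<Union>ij\<in>{1..K} \<times> {1..K}. B ij)"
    unfolding B_def t_def[symmetric] by (auto simp: not_less) (meson atLeastAtMost_iff not_less)
  have "P.prob (space M - (\<Union>ij\<in>{1..K} \<times> {1..K}. B ij)) = 1 - P.prob (\<Union>ij\<in>{1..K} \<times> {1..K}. B ij)"
    using Bm by (intro P.prob_compl) auto
  thus ?thesis unfolding eq using Ule by linarith
qed

end
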